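(* Let $P$ and $N$ be holomorphic polynomial mappings on $\mathbb{C}^n$ (with values in finite-dimensional spaces) and let $r=\|P\|^2-\|N\|^2$. Then $r\in\mathcal{Q}$ if and only if there exist a holomorphic polynomial mapping $B$, not identically zero, and a linear mapping $L$ such that $I-L^*L$ is non-negative definite and $B\otimes N=L(B\otimes P)$.
   Context: $\mathcal{Q}$ is the set of Hermitian symmetric polynomials $r$ on $\mathbb{C}^n$ for which there are holomorphic polynomial mappings $F,G$, $G\not\equiv 0$, with $r(z,\overline z)=\|F(z)\|^2/\|G(z)\|^2$. For mappings $B$ and $P$ with values in $\mathbb{C}^a$, $\mathbb{C}^b$, $B\otimes P$ denotes the $\mathbb{C}^a\otimes\mathbb{C}^b$-valued mapping $z\mapsto B(z)\otimes P(z)$ (components $B_iP_j$), so $\|B\otimes P\|^2=\|B\|^2\|P\|^2$. *)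

theory Defs
  imports "HOL-Analysis.Analysis"
begin

text \<open>A holomorphic polynomial mapping with values in C^k is represented by its k component
functions F 0, ..., F (k-1), each a holomorphic polynomial.\<close>

definition monom :: "complex^'n \<Rightarrow> nat^'n \<Rightarrow> complex" where
  "monom z \<alpha> = (\<Prod>i\<in>UNIV. (z$i) ^ (\<alpha>$i))"

definition hol_poly :: "(complex^'n \<Rightarrow> complex) \<Rightarrow> bool" where
  "hol_poly f \<longleftrightarrow> (\<exists>A c. finite A \<and> (\<forall>z. f z = (\<Sum>\<alpha>\<in>A. c \<alpha> * monom z \<alpha>)))"

definition hol_poly_map :: "nat \<Rightarrow> (nat \<Rightarrow> complex^'n \<Rightarrow> complex) \<Rightarrow> bool" where
  "hol_poly_map k F \<longleftrightarrow> (\<forall>i<k. hol_poly (F i))"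

definition sqnorm :: "nat \<Rightarrow> (nat \<Rightarrow> complex^'n \<Rightarrow> complex) \<Rightarrow> complex^'n \<Rightarrow> real" where
  "sqnorm k F z = (\<Sum>i<k. (cmod (F i z))\<^sup>2)"

text \<open>Tensor product B (values in C^a) \<otimes> P (values in C^p), with values in C^(a*p);
component index i*p+j corresponds to B_i P_j.\<close>
definition tensor_map :: "nat \<Rightarrow> (nat \<Rightarrow> complex^'n \<Rightarrow> complex) \<Rightarrow>
    (nat \<Rightarrow> complex^'n \<Rightarrow> complex) \<Rightarrow> (nat \<Rightarrow> complex^'n \<Rightarrow> complex)" where
  "tensor_map p B P = (\<lambda>m z. B (m div p) z * P (m mod p) z)"

definition herm_sym_poly :: "(complex^'n \<Rightarrow> real) \<Rightarrow> bool" where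
  "herm_sym_poly r \<longleftrightarrow> (\<exists>A c. finite A \<and> (\<forall>\<alpha> \<beta>. c (\<beta>, \<alpha>) = cnj (c (\<alpha>, \<beta>))) \<and>
      (\<forall>z. complex_of_real (r z) = (\<Sum>(\<alpha>,\<beta>)\<in>A. c (\<alpha>, \<beta>) * monom z \<alpha> * cnj (monom z \<beta>))))"

definition in_Q :: "(complex^'n \<Rightarrow> real) \<Rightarrow> bool" where
  "in_Q r \<longleftrightarrow> herm_sym_poly r \<and>
     (\<exists>k F l G. hol_poly_map k F \<and> hol_poly_map l G \<and> (\<exists>z i. i < l \<and> G i z \<noteq> 0) \<and>
        (\<forall>z. sqnorm l G z \<noteq> 0 \<longrightarrow> r z = sqnorm k F z / sqnorm l G z))"

definition mat_apply :: "nat \<Rightarrow> (nat \<Rightarrow> nat \<Rightarrow> complex) \<Rightarrow> (nat \<Rightarrow> complex) \<Rightarrow> nat \<Rightarrow> complex" where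
  "mat_apply d L v = (\<lambda>i. \<Sum>j<d. L i j * v j)"

definition id_minus_adj_mult :: "nat \<Rightarrow> (nat \<Rightarrow> nat \<Rightarrow> complex) \<Rightarrow> nat \<Rightarrow> nat \<Rightarrow> complex" where
  "id_minus_adj_mult e L = (\<lambda>i j. (if i = j then 1 else 0) - (\<Sum>k<e. cnj (L k i) * L k j))"

definition nonneg_def :: "nat \<Rightarrow> (nat \<Rightarrow> nat \<Rightarrow> complex) \<Rightarrow> bool" where
  "nonneg_def d M \<longleftrightarrow> (\<forall>v::nat \<Rightarrow> complex.
      let q = (\<Sum>i<d. \<Sum>j<d. cnj (v i) * M i j * v j) in Im q = 0 \<and> 0 \<le> Re q)"

end

theory Submission
  imports Defs
begin


definition upoly :: "(complex \<Rightarrow> complex) \<Rightarrow> bool" where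
  "upoly f \<longleftrightarrow> (\<exists>p. \<forall>x. f x = poly p x)"

lemma upoly_const[simp]: "upoly (\<lambda>x. c)"
  unfolding upoly_def by (rule exI[of _ "[:c:]"]) simp

lemma upoly_id[simp]: "upoly (\<lambda>x. x)"
  unfolding upoly_def by (rule exI[of _ "[:0,1:]"]) simp

lemma upoly_add[intro]: "upoly f \<Longrightarrow> upoly g \<Longrightarrow> upoly (\<lambda>x. f x + g x)"
  unfolding upoly_def by (metis poly_add)

lemma upoly_diff[intro]: "upoly f \<Longrightarrow> upoly g \<Longrightarrow> upoly (\<lambda>x. f x - g x)"
  unfolding upoly_def by (metis poly_diff)

lemma upoly_mult[intro]: "upoly f \<Longrightarrow> upoly g \<Longrightarrow> upoly (\<lambda>x. f x * g x)"
  unfolding upoly_def by (metis poly_mult)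

lemma upoly_sum: "finite A \<Longrightarrow> (\<And>a. a \<in> A \<Longrightarrow> upoly (f a)) \<Longrightarrow> upoly (\<lambda>x. \<Sum>a\<in>A. f a x)"
  by (induction A rule: finite_induct) auto

lemma upoly_prod: "finite A \<Longrightarrow> (\<And>a. a \<in> A \<Longrightarrow> upoly (f a)) \<Longrightarrow> upoly (\<lambda>x. \<Prod>a\<in>A. f a x)"
  by (induction A rule: finite_induct) auto

lemma upoly_power[intro]: "upoly f \<Longrightarrow> upoly (\<lambda>x. f x ^ n)"
  by (induction n) auto

lemma upoly_comp: "upoly f \<Longrightarrow> upoly g \<Longrightarrow> upoly (\<lambda>x. f (g x))"
  unfolding upoly_def by (metis poly_pcompose)

lemma upoly_cnj: "upoly f \<Longrightarrow> upoly (\<lambda>x. cnj (f (cnj x)))"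
  unfolding upoly_def by (metis poly_map_poly_cnj)

lemma upoly_zero_nat:
  assumes "upoly f" "\<And>k::nat. f (of_nat k) = 0"
  shows "f x = 0"
proof -
  obtain p where p: "\<And>x. f x = poly p x" using assms(1) unfolding upoly_def by blast
  show ?thesis
  proof (cases "p = 0")
    case True then show ?thesis using p by simp
  next
    case False
    have "range (of_nat :: nat \<Rightarrow> complex) \<subseteq> {x. poly p x = 0}" using assms(2) p by auto
    moreover have "infinite (range (of_nat :: nat \<Rightarrow> complex))"
      by (rule range_inj_infinite) (simp add: inj_on_def)
    ultimately show ?thesis using poly_roots_finite[OF False] finite_subset by blast
  qed
qed

lemma upoly_affine: "upoly (\<lambda>x. c + d * x)" "upoly (\<lambda>x. c - d * x)"
  by (rule upoly_add upoly_diff upoly_mult upoly_const upoly_id)+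

lemma polar_gen:
  assumes up: "\<And>f g. upoly f \<Longrightarrow> upoly g \<Longrightarrow> upoly (\<lambda>x. H (f x) (g x))"
    and h: "\<And>s. H s (cnj s) = 0"
  shows "H s u = 0"
proof -
  have s1: "H (of_nat n + \<i> * y) (of_nat n - \<i> * y) = 0" for n :: nat and y
  proof (rule upoly_zero_nat[where f = "\<lambda>y. H (of_nat n + \<i> * y) (of_nat n - \<i> * y)"])
    show "upoly (\<lambda>y. H (of_nat n + \<i> * y) (of_nat n - \<i> * y))" by (rule up; rule upoly_affine)
    fix k :: nat
    have e: "cnj (of_nat n + \<i> * of_nat k) = of_nat n - \<i> * of_nat k" by simp
    show "H (of_nat n + \<i> * of_nat k) (of_nat n - \<i> * of_nat k) = 0"
      using h[of "of_nat n + \<i> * of_nat k"] unfolding e .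
  qed
  have s2: "H (x + \<i> * y) (x - \<i> * y) = 0" for x y
  proof (rule upoly_zero_nat[where f = "\<lambda>x. H (x + \<i> * y) (x - \<i> * y)"])
    show "upoly (\<lambda>x. H (x + \<i> * y) (x - \<i> * y))"
      by (rule up; rule upoly_add upoly_diff; rule upoly_id upoly_const)
  qed (rule s1)
  have e1: "s = (s+u)/2 + \<i> * ((s-u)/(2*\<i>))" and e2: "u = (s+u)/2 - \<i> * ((s-u)/(2*\<i>))"
    by (simp_all add: field_simps)
  have "H ((s+u)/2 + \<i> * ((s-u)/(2*\<i>))) ((s+u)/2 - \<i> * ((s-u)/(2*\<i>))) = 0" by (rule s2)
  then show "H s u = 0" by (simp only: e1[symmetric] e2[symmetric])
qed

lemma upoly_lin: "upoly (\<lambda>s. a + s * b)"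
  unfolding upoly_def by (rule exI[of _ "[:a,b:]"]) (simp add: algebra_simps)

definition lin :: "complex^'n \<Rightarrow> complex^'n \<Rightarrow> complex \<Rightarrow> complex^'n" where
  "lin y x s = (\<chi> i. y$i + s * (x$i - y$i))"

lemma lin_0[simp]: "lin y x 0 = y" and lin_1[simp]: "lin y x 1 = x"
  by (simp_all add: lin_def vec_eq_iff)

definition lpoly :: "(complex^'n \<Rightarrow> complex) \<Rightarrow> bool" where
  "lpoly f \<longleftrightarrow> (\<forall>y x. upoly (\<lambda>s. f (lin y x s)))"

lemma hol_poly_lpoly: fixes f :: "complex^'n \<Rightarrow> complex" shows "hol_poly f \<Longrightarrow> lpoly f"
proof -
  assume "hol_poly f"
  then obtain A c where A: "finite A" and f: "\<And>z. f z = (\<Sum>\<alpha>\<in>A. c \<alpha> * monom z \<alpha>)"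
    unfolding hol_poly_def by blast
  show "lpoly f" unfolding lpoly_def
  proof (intro allI)
    fix y x :: "complex^'n"
    have "upoly (\<lambda>s. \<Sum>\<alpha>\<in>A. c \<alpha> * monom (lin y x s) \<alpha>)"
    proof (rule upoly_sum[OF A])
      fix \<alpha> :: "nat^'n" show "upoly (\<lambda>s. c \<alpha> * monom (lin y x s) \<alpha>)"
        unfolding monom_def lin_def vec_lambda_beta
      proof (rule upoly_mult[OF upoly_const], rule upoly_prod)
        fix i :: 'n
        show "upoly (\<lambda>s. (y $ i + s * (x $ i - y $ i)) ^ \<alpha> $ i)"
          by (rule upoly_power[OF upoly_lin])
      qed simp
    qed
    moreover have e: "f (lin y x s) = (\<Sum>\<alpha>\<in>A. c \<alpha> * monom (lin y x s) \<alpha>)" for s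
      by (rule f)
    ultimately show "upoly (\<lambda>s. f (lin y x s))" by (simp only: e)
  qed
qed

lemma lpoly_mult: "lpoly f \<Longrightarrow> lpoly g \<Longrightarrow> lpoly (\<lambda>z. f z * g z)"
  unfolding lpoly_def by (intro allI upoly_mult) auto

lemma lpoly_sum: "finite A \<Longrightarrow> (\<And>a. a \<in> A \<Longrightarrow> lpoly (f a)) \<Longrightarrow> lpoly (\<lambda>z. \<Sum>a\<in>A. f a z)"
  unfolding lpoly_def by (intro allI upoly_sum) auto

definition ip :: "nat \<Rightarrow> (nat \<Rightarrow> complex) \<Rightarrow> (nat \<Rightarrow> complex) \<Rightarrow> complex" where
  "ip d x y = (\<Sum>t<d. x t * cnj (y t))"

definition sqn :: "nat \<Rightarrow> (nat \<Rightarrow> complex) \<Rightarrow> real" where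
  "sqn d x = (\<Sum>t<d. (cmod (x t))\<^sup>2)"

lemma sqnorm_sqn: "sqnorm k F z = sqn k (\<lambda>i. F i z)"
  by (simp add: sqnorm_def sqn_def)

lemma ip_self: "ip d x x = of_real (sqn d x)"
  unfolding ip_def sqn_def of_real_sum by (simp add: complex_mult_cnj cmod_power2 del: of_real_power)



lemma gram_polar:
  fixes A C F :: "nat \<Rightarrow> complex^'n \<Rightarrow> complex"
  assumes A: "\<And>i. i<d1 \<Longrightarrow> lpoly (A i)" and C: "\<And>i. i<d2 \<Longrightarrow> lpoly (C i)"
    and F: "\<And>i. i<d3 \<Longrightarrow> lpoly (F i)"
    and h: "\<And>z. sqnorm d1 A z = sqnorm d2 C z + sqnorm d3 F z"
  shows "ip d1 (\<lambda>i. A i x) (\<lambda>i. A i y) = ip d2 (\<lambda>i. C i x) (\<lambda>i. C i y) + ip d3 (\<lambda>i. F i x) (\<lambda>i. F i y)"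
proof -
  define g where "g = lin y x"
  define H where "H s u = (\<Sum>i<d1. A i (g s) * cnj (A i (g (cnj u))))
     - (\<Sum>i<d2. C i (g s) * cnj (C i (g (cnj u)))) - (\<Sum>i<d3. F i (g s) * cnj (F i (g (cnj u))))" for s u
  have up1: "upoly (\<lambda>x. \<Sum>i<d. B i (g (f x)) * cnj (B i (g (cnj (h x)))))"
    if B: "\<And>i. i<d \<Longrightarrow> lpoly (B i)" and f: "upoly f" and h': "upoly h" for d :: nat and B :: "nat \<Rightarrow> complex^'n \<Rightarrow> complex" and f h
  proof (rule upoly_sum)
    show "finite {..<d}" by simp
    fix i assume "i \<in> {..<d}"
    then have l: "upoly (\<lambda>s. B i (g s))" using B unfolding lpoly_def g_def by auto
    show "upoly (\<lambda>x. B i (g (f x)) * cnj (B i (g (cnj (h x)))))"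
      by (rule upoly_mult[OF upoly_comp[OF l f] upoly_comp[OF upoly_cnj[OF l] h']])
  qed
  have "H s u = 0" for s u
  proof (rule polar_gen[where H=H])
    fix f h :: "complex \<Rightarrow> complex" assume "upoly f" "upoly h"
    then show "upoly (\<lambda>x. H (f x) (h x))" unfolding H_def
      by (intro upoly_diff up1) (auto intro: A C F)
  next
    fix s
    have e: "(\<Sum>i<d. B i (g s) * cnj (B i (g s))) = of_real (sqnorm d B (g s))" for d and B :: "nat \<Rightarrow> complex^'n \<Rightarrow> complex"
      unfolding sqnorm_def of_real_sum by (simp add: complex_mult_cnj cmod_power2 del: of_real_power)
    show "H s (cnj s) = 0" unfolding H_def complex_cnj_cnj e h by simp
  qed
  from this[of 1 0] show ?thesis unfolding H_def g_def ip_def by (simp add: algebra_simps)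
qed



lemma ip_cnj: "ip d y x = cnj (ip d x y)"
  unfolding ip_def by (simp add: mult.commute)

lemma ip_sum_left: "ip d (\<lambda>t. \<Sum>r\<in>R. f r t) y = (\<Sum>r\<in>R. ip d (f r) y)"
  unfolding ip_def sum_distrib_right by (rule sum.swap)

lemma ip_sum_right: "ip d x (\<lambda>t. \<Sum>r\<in>R. f r t) = (\<Sum>r\<in>R. ip d x (f r))"
  unfolding ip_def cnj_sum sum_distrib_left by (rule sum.swap)

lemma ip_scale_left: "ip d (\<lambda>t. c * x t) y = c * ip d x y"
  unfolding ip_def sum_distrib_left by (simp add: mult.assoc)

lemma ip_scale_right: "ip d x (\<lambda>t. c * y t) = cnj c * ip d x y"
  unfolding ip_def sum_distrib_left by (rule sum.cong) (simp_all add: algebra_simps)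

lemma ip_diff_left: "ip d (\<lambda>t. x t - y t) z = ip d x z - ip d y z"
  unfolding ip_def by (simp add: algebra_simps sum_subtractf)

lemma ip_diff_right: "ip d z (\<lambda>t. x t - y t) = ip d z x - ip d z y"
  unfolding ip_def by (simp add: algebra_simps sum_subtractf)

lemma sqn_nonneg: "0 \<le> sqn d x"
  unfolding sqn_def by (simp add: sum_nonneg)

lemma sqn_eq_0: "sqn d x = 0 \<longleftrightarrow> (\<forall>t<d. x t = 0)"
  unfolding sqn_def by (subst sum_nonneg_eq_0_iff) auto

lemma sqn_ip: "sqn d x = Re (ip d x x)"
  by (simp add: ip_self)

lemma sqn_cong: "(\<And>t. t < d \<Longrightarrow> x t = y t) \<Longrightarrow> sqn d x = sqn d y"
  unfolding sqn_def by simp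

lemma ip_cong: "(\<And>t. t < d \<Longrightarrow> x t = x' t) \<Longrightarrow> (\<And>t. t < d \<Longrightarrow> y t = y' t) \<Longrightarrow> ip d x y = ip d x' y'"
  unfolding ip_def by simp

definition orthon :: "nat \<Rightarrow> nat \<Rightarrow> (nat \<Rightarrow> nat \<Rightarrow> complex) \<Rightarrow> bool" where
  "orthon d k E \<longleftrightarrow> (\<forall>i<k. \<forall>j<k. ip d (E i) (E j) = (if i = j then 1 else 0))"

lemma ip_on_comb:
  assumes "orthon d k E"
  shows "ip d (\<lambda>t. \<Sum>r<k. c r * E r t) (\<lambda>t. \<Sum>r<k. b r * E r t) = (\<Sum>r<k. c r * cnj (b r))"
proof -
  have "ip d (\<lambda>t. \<Sum>r<k. c r * E r t) (\<lambda>t. \<Sum>r<k. b r * E r t)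
      = (\<Sum>r<k. \<Sum>r'<k. c r * cnj (b r') * ip d (E r) (E r'))"
    unfolding ip_sum_left ip_scale_left ip_sum_right ip_scale_right
    by (simp add: sum_distrib_left algebra_simps)
  also have "\<dots> = (\<Sum>r<k. \<Sum>r'<k. if r' = r then c r * cnj (b r) else 0)"
    using assms unfolding orthon_def by (intro sum.cong refl) auto
  also have "\<dots> = (\<Sum>r<k. c r * cnj (b r))"
    by (intro sum.cong refl) simp
  finally show ?thesis .
qed

lemma ip_on_comb_left:
  assumes "orthon d k E" "j < k"
  shows "ip d (\<lambda>t. \<Sum>r<k. c r * E r t) (E j) = c j"
proof -
  have "ip d (\<lambda>t. \<Sum>r<k. c r * E r t) (E j) = (\<Sum>r<k. c r * ip d (E r) (E j))"
    unfolding ip_sum_left ip_scale_left ..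
  also have "\<dots> = (\<Sum>r<k. if r = j then c j else 0)"
    using assms unfolding orthon_def by (intro sum.cong refl) auto
  also have "\<dots> = c j" using assms(2) by simp
  finally show ?thesis .
qed

lemma bessel:
  assumes "orthon d k E"
  shows "(\<Sum>r<k. (cmod (ip d v (E r)))\<^sup>2) \<le> sqn d v"
proof -
  define c where "c r = ip d v (E r)" for r
  define P where "P t = (\<Sum>r<k. c r * E r t)" for t
  define S where "S = (\<Sum>r<k. c r * cnj (c r))"
  have PP: "ip d P P = S" unfolding P_def S_def by (rule ip_on_comb[OF assms])
  have Pv: "ip d P v = S" unfolding P_def S_def ip_sum_left ip_scale_left
    by (intro sum.cong refl) (simp add: c_def ip_cnj[of d v])
  have vP: "ip d v P = S"
    using Pv ip_cnj[of d v P] unfolding S_def by (simp add: mult.commute)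
  have "ip d (\<lambda>t. v t - P t) (\<lambda>t. v t - P t) = ip d v v - S"
    unfolding ip_diff_left ip_diff_right PP Pv vP by simp
  then have "sqn d (\<lambda>t. v t - P t) = sqn d v - Re S" by (simp add: sqn_ip)
  moreover have "Re S = (\<Sum>r<k. (cmod (c r))\<^sup>2)"
    unfolding S_def by (simp add: complex_mult_cnj cmod_power2)
  ultimately show ?thesis using sqn_nonneg[of d "\<lambda>t. v t - P t"] unfolding c_def by simp
qed

lemma orthon_le:
  assumes "orthon d k E"
  shows "k \<le> d"
proof -
  have "real k = (\<Sum>r<k. sqn d (E r))"
    using assms unfolding orthon_def sqn_ip by simp
  also have "\<dots> = (\<Sum>t<d. \<Sum>r<k. (cmod (E r t))\<^sup>2)"
    unfolding sqn_def by (rule sum.swap)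
  also have "\<dots> \<le> (\<Sum>t<d. 1)"
  proof (rule sum_mono)
    fix t assume t: "t \<in> {..<d}"
    define \<epsilon> where "\<epsilon> s = (if s = t then 1 else (0::complex))" for s
    have "ip d \<epsilon> (E r) = cnj (E r t)" for r
    proof -
      have "(\<Sum>s<d. \<epsilon> s * cnj (E r s)) = (\<Sum>s<d. if s = t then cnj (E r t) else 0)"
        by (rule sum.cong) (auto simp: \<epsilon>_def)
      then show ?thesis unfolding ip_def using t by simp
    qed
    then have "(\<Sum>r<k. (cmod (E r t))\<^sup>2) = (\<Sum>r<k. (cmod (ip d \<epsilon> (E r)))\<^sup>2)" by simp
    also have "\<dots> \<le> sqn d \<epsilon>" by (rule bessel[OF assms])
    also have "sqn d \<epsilon> = 1"
    proof -
      have "(\<Sum>s<d. (cmod (\<epsilon> s))\<^sup>2) = (\<Sum>s<d. if s = t then 1 else 0)"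
        by (rule sum.cong) (auto simp: \<epsilon>_def)
      then show ?thesis unfolding sqn_def using t by simp
    qed
    finally show "(\<Sum>r<k. (cmod (E r t))\<^sup>2) \<le> 1" .
  qed
  finally show ?thesis by simp
qed



definition comb :: "nat \<Rightarrow> (nat \<Rightarrow> complex) \<Rightarrow> (nat \<Rightarrow> nat \<Rightarrow> complex) \<Rightarrow> nat \<Rightarrow> complex" where
  "comb m \<delta> V = (\<lambda>t. \<Sum>j<m. \<delta> j * V j t)"

lemma comb_lin: "(\<Sum>r\<in>R. c r * comb m (\<gamma> r) V t) = comb m (\<lambda>j. \<Sum>r\<in>R. c r * \<gamma> r j) V t"
  unfolding comb_def sum_distrib_left sum_distrib_right
  by (subst sum.swap) (simp add: mult.assoc)

lemma comb_Suc_upd: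
  "comb (Suc m) (\<delta>(m:=a)) (\<lambda>j. V ((w(m:=x)) j)) t = comb m \<delta> (\<lambda>j. V (w j)) t + a * V x t"
  unfolding comb_def by simp

lemma step:
  assumes on: "orthon d k E" and Er: "\<And>r. r<k \<Longrightarrow> E r = comb m (\<gamma> r) (\<lambda>j. X (w j))"
   and nz: "\<not> (\<forall>t<d. X x t = (\<Sum>r<k. ip d (X x) (E r) * E r t))"
  shows "\<exists>E' \<gamma>'. orthon d (Suc k) E' \<and> (\<forall>r<Suc k. E' r = comb (Suc m) (\<gamma>' r) (\<lambda>j. X ((w(m:=x)) j)))"
proof -
  define c where "c r = ip d (X x) (E r)" for r
  define \<rho> where "\<rho> t = X x t - (\<Sum>r<k. c r * E r t)" for t
  have "sqn d \<rho> \<noteq> 0" using nz unfolding sqn_eq_0 \<rho>_def c_def by simp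
  then have sp: "sqn d \<rho> > 0" using sqn_nonneg[of d \<rho>] by linarith
  define n where "n = sqrt (sqn d \<rho>)"
  have n: "n > 0" "n * n = sqn d \<rho>" using sp unfolding n_def by simp_all
  define a where "a = complex_of_real (1/n)"
  define E' where "E' = E(k := (\<lambda>t. a * \<rho> t))"
  define \<gamma>' where "\<gamma>' r = (if r < k then (\<gamma> r)(m := 0) else (\<lambda>j. \<Sum>r'<k. (- (a * c r')) * \<gamma> r' j)(m := a))" for r
  have rep: "E' r = comb (Suc m) (\<gamma>' r) (\<lambda>j. X ((w(m:=x)) j))" if r: "r < Suc k" for r
  proof (cases "r < k")
    case True
    have "comb (Suc m) ((\<gamma> r)(m:=0)) (\<lambda>j. X ((w(m:=x)) j)) t = comb m (\<gamma> r) (\<lambda>j. X (w j)) t" for t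
      by (simp only: comb_Suc_upd) simp
    then show ?thesis unfolding E'_def \<gamma>'_def using Er[OF True] True by (auto intro!: ext)
  next
    case False
    then have rk: "r = k" using r by simp
    have "comb (Suc m) (\<gamma>' r) (\<lambda>j. X ((w(m:=x)) j)) t = a * \<rho> t" for t
    proof -
      have "comb (Suc m) (\<gamma>' r) (\<lambda>j. X ((w(m:=x)) j)) t
          = comb m (\<lambda>j. \<Sum>r'<k. (- (a * c r')) * \<gamma> r' j) (\<lambda>j. X (w j)) t + a * X x t"
      proof -
        have "\<gamma>' r = (\<lambda>j. \<Sum>r'<k. (- (a * c r')) * \<gamma> r' j)(m := a)" using rk by (simp add: \<gamma>'_def)
        then show ?thesis by (simp only: comb_Suc_upd)
      qed
      also have "comb m (\<lambda>j. \<Sum>r'<k. (- (a * c r')) * \<gamma> r' j) (\<lambda>j. X (w j)) t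
          = (\<Sum>r'<k. (- (a * c r')) * comb m (\<gamma> r') (\<lambda>j. X (w j)) t)"
        by (rule comb_lin[symmetric])
      also have "\<dots> = (\<Sum>r'<k. (- (a * c r')) * E r' t)" using Er by simp
      finally show ?thesis unfolding \<rho>_def
        by (simp add: algebra_simps sum_distrib_left sum_negf)
    qed
    then show ?thesis unfolding E'_def rk by auto
  qed
  have o1: "ip d (E' k) (E j) = 0" if j: "j < k" for j
  proof -
    have "ip d (E' k) (E j) = a * (ip d (X x) (E j) - ip d (\<lambda>t. \<Sum>r<k. c r * E r t) (E j))"
      unfolding E'_def \<rho>_def by (simp add: ip_scale_left ip_diff_left)
    also have "\<dots> = 0" unfolding ip_on_comb_left[OF on j] c_def by simp
    finally show ?thesis .
  qed
  have o2: "ip d (E' k) (E' k) = 1"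
  proof -
    have "ip d (E' k) (E' k) = a * cnj a * ip d \<rho> \<rho>"
      unfolding E'_def by (simp add: ip_scale_left ip_scale_right)
    also have "\<dots> = complex_of_real ((1/n) * (1/n) * sqn d \<rho>)"
      unfolding a_def ip_self by simp
    also have "\<dots> = 1" using n sp by (simp add: field_simps)
    finally show ?thesis .
  qed
  have "orthon d (Suc k) E'"
    unfolding orthon_def
  proof (intro allI impI)
    fix i j assume i: "i < Suc k" and j: "j < Suc k"
    show "ip d (E' i) (E' j) = (if i = j then 1 else 0)"
    proof (cases "i < k")
      case ik: True
      show ?thesis
      proof (cases "j < k")
        case True
        then show ?thesis using ik on unfolding orthon_def E'_def by auto
      next
        case False
        then have "j = k" using j by simp
        then show ?thesis using ik o1[OF ik] ip_cnj[of d "E' k" "E i"] unfolding E'_def by auto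
      qed
    next
      case False
      then have ik: "i = k" using i by simp
      show ?thesis
      proof (cases "j < k")
        case True
        then show ?thesis using ik o1[OF True] unfolding E'_def by auto
      next
        case False
        then have "j = k" using j by simp
        then show ?thesis using ik o2 by simp
      qed
    qed
  qed
  then show ?thesis using rep by blast
qed

lemma contraction_ext:
  fixes X Y :: "'p \<Rightarrow> nat \<Rightarrow> complex"
  assumes D: "\<And>m w \<delta>. sqn e (comb m \<delta> (\<lambda>j. Y (w j))) \<le> sqn d (comb m \<delta> (\<lambda>j. X (w j)))"
  shows "\<exists>L. (\<forall>x. \<forall>i<e. Y x i = (\<Sum>j<d. L i j * X x j)) \<and> (\<forall>v. sqn e (\<lambda>i. \<Sum>j<d. L i j * v j) \<le> sqn d v)"
proof -
  define good where "good k \<longleftrightarrow> (\<exists>E m w \<gamma>. orthon d k E \<and> (\<forall>r<k. E r = comb m (\<gamma> r) (\<lambda>j. X (w j))))" for k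
  have g0: "good 0" unfolding good_def orthon_def by auto
  have bd: "k \<le> d" if "good k" for k using that orthon_le unfolding good_def by blast
  define K where "K = (GREATEST k. good k)"
  have gK: "good K" unfolding K_def by (rule GreatestI_nat[where P=good, OF g0 bd])
  then obtain E m w \<gamma> where on: "orthon d K E" and Er: "\<And>r. r<K \<Longrightarrow> E r = comb m (\<gamma> r) (\<lambda>j. X (w j))"
    unfolding good_def by blast
  have max: "\<forall>t<d. X x t = (\<Sum>r<K. ip d (X x) (E r) * E r t)" for x
  proof (rule ccontr)
    assume "\<not> ?thesis"
    from step[OF on Er this] have "good (Suc K)" unfolding good_def by blast
    then have "Suc K \<le> K" unfolding K_def by (rule Greatest_le_nat[where P=good, OF _ bd])
    then show False by simp
  qed
  define F where "F r = comb m (\<gamma> r) (\<lambda>j. Y (w j))" for r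
  define L where "L i j = (\<Sum>r<K. F r i * cnj (E r j))" for i j
  have Lv: "(\<Sum>j<d. L i j * v j) = (\<Sum>r<K. ip d v (E r) * F r i)" for i v
    unfolding L_def ip_def sum_distrib_right sum_distrib_left
    by (subst sum.swap) (simp add: algebra_simps)
  have cF: "(\<Sum>r<K. c r * F r i) = comb m (\<lambda>j. \<Sum>r<K. c r * \<gamma> r j) (\<lambda>j. Y (w j)) i" for c i
    unfolding F_def by (rule comb_lin)
  have cE: "(\<Sum>r<K. c r * E r t) = comb m (\<lambda>j. \<Sum>r<K. c r * \<gamma> r j) (\<lambda>j. X (w j)) t" for c t
    using comb_lin[of c m \<gamma> "\<lambda>j. X (w j)" t "{..<K}"] Er by simp
  have contr: "sqn e (\<lambda>i. \<Sum>j<d. L i j * v j) \<le> sqn d v" for v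
  proof -
    define c where "c r = ip d v (E r)" for r
    define \<delta> where "\<delta> j = (\<Sum>r<K. c r * \<gamma> r j)" for j
    have dd: "(\<lambda>j. \<Sum>r<K. c r * \<gamma> r j) = \<delta>" by (simp add: \<delta>_def fun_eq_iff)
    have "(\<lambda>i. \<Sum>j<d. L i j * v j) = comb m \<delta> (\<lambda>j. Y (w j))"
    proof (rule ext)
      fix i
      have "(\<Sum>j<d. L i j * v j) = (\<Sum>r<K. c r * F r i)" by (simp add: Lv c_def)
      also have "\<dots> = comb m \<delta> (\<lambda>j. Y (w j)) i" unfolding cF dd ..
      finally show "(\<Sum>j<d. L i j * v j) = comb m \<delta> (\<lambda>j. Y (w j)) i" .
    qed
    then have "sqn e (\<lambda>i. \<Sum>j<d. L i j * v j) \<le> sqn d (comb m \<delta> (\<lambda>j. X (w j)))"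
      using D by simp
    also have "comb m \<delta> (\<lambda>j. X (w j)) = (\<lambda>t. \<Sum>r<K. c r * E r t)"
      by (rule ext) (simp add: cE dd)
    also have "sqn d (\<lambda>t. \<Sum>r<K. c r * E r t) = (\<Sum>r<K. (cmod (c r))\<^sup>2)"
      unfolding sqn_ip ip_on_comb[OF on] by (simp add: complex_mult_cnj cmod_power2)
    also have "\<dots> \<le> sqn d v" unfolding c_def by (rule bessel[OF on])
    finally show ?thesis .
  qed
  have repr: "Y x i = (\<Sum>j<d. L i j * X x j)" if i: "i < e" for x i
  proof -
    define c where "c r = ip d (X x) (E r)" for r
    define \<delta> where "\<delta> j = (\<Sum>r<K. c r * \<gamma> r j)" for j
    have dd: "(\<lambda>j. \<Sum>r<K. c r * \<gamma> r j) = \<delta>" by (simp add: \<delta>_def fun_eq_iff)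
    have mx: "\<forall>t<d. X x t = (\<Sum>r<K. c r * E r t)" using max[of x] by (simp add: c_def)
    have "sqn d (comb (Suc m) (\<delta>(m:=-1)) (\<lambda>j. X ((w(m:=x)) j))) = 0"
      unfolding sqn_eq_0 comb_Suc_upd using mx cE[of c] unfolding dd by simp
    then have "sqn e (comb (Suc m) (\<delta>(m:=-1)) (\<lambda>j. Y ((w(m:=x)) j))) = 0"
      using D[of "Suc m" "\<delta>(m:=-1)" "w(m:=x)"] sqn_nonneg[of e] by (simp add: order_antisym)
    then have "comb m \<delta> (\<lambda>j. Y (w j)) i - Y x i = 0"
      unfolding sqn_eq_0 comb_Suc_upd using i by simp
    moreover have "(\<Sum>j<d. L i j * X x j) = (\<Sum>r<K. c r * F r i)" unfolding Lv by (simp add: c_def)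
    ultimately show ?thesis using cF[of c i] unfolding dd by simp
  qed
  show ?thesis using contr repr by blast
qed



lemma ip_comb: "ip d (comb m \<delta> V) (comb m \<delta> V) = (\<Sum>j<m. \<Sum>j'<m. \<delta> j * cnj (\<delta> j') * ip d (V j) (V j'))"
  unfolding comb_def ip_sum_left ip_scale_left ip_sum_right ip_scale_right
  by (simp add: sum_distrib_left algebra_simps)

lemma domination:
  assumes G: "\<And>x y. ip d (X x) (X y) = ip e (Y x) (Y y) + ip k (Z x) (Z y)"
  shows "sqn e (comb m \<delta> (\<lambda>j. Y (w j))) \<le> sqn d (comb m \<delta> (\<lambda>j. X (w j)))"
proof -
  have "ip d (comb m \<delta> (\<lambda>j. X (w j))) (comb m \<delta> (\<lambda>j. X (w j)))
     = ip e (comb m \<delta> (\<lambda>j. Y (w j))) (comb m \<delta> (\<lambda>j. Y (w j))) + ip k (comb m \<delta> (\<lambda>j. Z (w j))) (comb m \<delta> (\<lambda>j. Z (w j)))"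
    unfolding ip_comb G by (simp add: algebra_simps sum.distrib)
  then have "sqn d (comb m \<delta> (\<lambda>j. X (w j))) = sqn e (comb m \<delta> (\<lambda>j. Y (w j))) + sqn k (comb m \<delta> (\<lambda>j. Z (w j)))"
    unfolding sqn_ip by simp
  then show ?thesis using sqn_nonneg[of k] by simp
qed

lemma form_id:
  "(\<Sum>i<d. \<Sum>j<d. cnj (v i) * id_minus_adj_mult e L i j * v j)
     = of_real (sqn d v - sqn e (\<lambda>i. \<Sum>j<d. L i j * v j))"
proof -
  have a: "(\<Sum>i<d. \<Sum>j<d. cnj (v i) * (if i = j then 1 else 0) * v j) = of_real (sqn d v)"
  proof -
    have "(\<Sum>j<d. cnj (v i) * (if i = j then 1 else 0) * v j) = (\<Sum>j<d. if i = j then v i * cnj (v i) else 0)" for i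
      by (rule sum.cong) auto
    then show ?thesis unfolding ip_self[symmetric] ip_def by simp
  qed
  have b: "(\<Sum>i<d. \<Sum>j<d. cnj (v i) * (\<Sum>k<e. cnj (L k i) * L k j) * v j)
      = ip e (\<lambda>k. \<Sum>j<d. L k j * v j) (\<lambda>k. \<Sum>j<d. L k j * v j)"
  proof -
    have "ip e (\<lambda>k. \<Sum>j<d. L k j * v j) (\<lambda>k. \<Sum>j<d. L k j * v j)
       = (\<Sum>k<e. \<Sum>j<d. \<Sum>i<d. (L k j * v j) * (cnj (L k i) * cnj (v i)))"
      unfolding ip_def cnj_sum complex_cnj_mult sum_product ..
    also have "\<dots> = (\<Sum>j<d. \<Sum>i<d. \<Sum>k<e. (L k j * v j) * (cnj (L k i) * cnj (v i)))"
      by (subst sum.swap, subst (2) sum.swap, rule refl)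
    also have "\<dots> = (\<Sum>i<d. \<Sum>j<d. \<Sum>k<e. (L k j * v j) * (cnj (L k i) * cnj (v i)))"
      by (rule sum.swap)
    also have "\<dots> = (\<Sum>i<d. \<Sum>j<d. cnj (v i) * (\<Sum>k<e. cnj (L k i) * L k j) * v j)"
      by (simp add: sum_distrib_left sum_distrib_right algebra_simps)
    finally show ?thesis ..
  qed
  have "(\<Sum>i<d. \<Sum>j<d. cnj (v i) * id_minus_adj_mult e L i j * v j)
      = (\<Sum>i<d. \<Sum>j<d. cnj (v i) * (if i = j then 1 else 0) * v j)
        - (\<Sum>i<d. \<Sum>j<d. cnj (v i) * (\<Sum>k<e. cnj (L k i) * L k j) * v j)"
    unfolding id_minus_adj_mult_def by (simp add: algebra_simps sum_subtractf)
  also have "\<dots> = of_real (sqn d v) - of_real (sqn e (\<lambda>i. \<Sum>j<d. L i j * v j))"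
    unfolding a b ip_self ..
  finally show ?thesis by simp
qed

lemma nonneg_def_iff:
  "nonneg_def d (id_minus_adj_mult e L) \<longleftrightarrow> (\<forall>v. sqn e (\<lambda>i. \<Sum>j<d. L i j * v j) \<le> sqn d v)"
  unfolding nonneg_def_def Let_def form_id by simp



definition hf :: "nat set \<Rightarrow> (nat \<Rightarrow> nat \<Rightarrow> complex) \<Rightarrow> (nat \<Rightarrow> complex) \<Rightarrow> complex" where
  "hf S M v = (\<Sum>i\<in>S. \<Sum>j\<in>S. cnj (v i) * M i j * v j)"

lemma hf_insert:
  assumes "finite S" "x \<notin> S"
  shows "hf (insert x S) M v = cnj (v x) * M x x * v x + cnj (v x) * (\<Sum>j\<in>S. M x j * v j)
     + (\<Sum>i\<in>S. cnj (v i) * M i x) * v x + hf S M v"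
  unfolding hf_def using assms
  by (simp add: sum.distrib sum_distrib_left sum_distrib_right algebra_simps)

lemma hf_cong: "(\<And>i. i \<in> S \<Longrightarrow> v i = v' i) \<Longrightarrow> hf S M v = hf S M v'"
  unfolding hf_def by simp

lemma sum_ind: fixes f :: "nat \<Rightarrow> complex" shows "finite S \<Longrightarrow> j \<in> S \<Longrightarrow> (\<Sum>i\<in>S. f i * (if i = j then 1 else 0)) = f j"
proof -
  assume "finite S" "j \<in> S"
  have "(\<Sum>i\<in>S. f i * (if i = j then 1 else 0)) = (\<Sum>i\<in>S. if i = j then f j else 0)"
    by (rule sum.cong) auto
  then show ?thesis using \<open>finite S\<close> \<open>j \<in> S\<close> by simp
qed

lemma sum_ind': fixes f :: "nat \<Rightarrow> complex" shows "finite S \<Longrightarrow> j \<in> S \<Longrightarrow> (\<Sum>i\<in>S. cnj (if i = j then 1 else 0) * f i) = f j"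
proof -
  assume "finite S" "j \<in> S"
  have "(\<Sum>i\<in>S. cnj (if i = j then 1 else 0) * f i) = (\<Sum>i\<in>S. if i = j then f j else 0)"
    by (rule sum.cong) auto
  then show ?thesis using \<open>finite S\<close> \<open>j \<in> S\<close> by simp
qed

lemma hf_ind: assumes "finite S" "j \<in> S" shows "hf S M (\<lambda>i. if i = j then 1 else 0) = M j j"
proof -
  have "hf S M (\<lambda>i. if i = j then 1 else 0)
     = (\<Sum>i\<in>S. cnj (if i = j then 1 else 0) * (\<Sum>k\<in>S. M i k * (if k = j then 1 else 0)))"
    unfolding hf_def by (simp add: sum_distrib_left mult.assoc)
  also have "\<dots> = (\<Sum>i\<in>S. cnj (if i = j then 1 else 0) * M i j)"
    using sum_ind[OF assms] by simp
  also have "\<dots> = M j j" by (rule sum_ind'[OF assms])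
  finally show ?thesis .
qed

lemma hf_zero: "hf S M (\<lambda>i. 0) = 0"
  unfolding hf_def by simp



lemma diag_zero_row:
  assumes S: "finite S" "x \<notin> S" and j: "j \<in> S"
    and herm: "\<forall>i\<in>insert x S. \<forall>j\<in>insert x S. M j i = cnj (M i j)"
    and psd: "\<forall>v. 0 \<le> Re (hf (insert x S) M v)"
    and z: "M x x = 0"
  shows "M x j = 0"
proof (rule ccontr)
  assume b: "M x j \<noteq> 0"
  define b where "b = M x j"
  have bp: "(cmod b)\<^sup>2 > 0" using b unfolding b_def by simp
  define t where "t = (Re (M j j) + 1) / (2 * (cmod b)\<^sup>2)"
  define s where "s = - (complex_of_real t * b)"
  define v where "v i = (if i = x then s else if i = j then 1 else 0)" for i
  have xj: "x \<noteq> j" using S j by auto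
  have vS: "v i = (if i = j then 1 else 0)" if "i \<in> S" for i using that S unfolding v_def by auto
  have e1: "(\<Sum>k\<in>S. M x k * v k) = M x j"
    using sum_ind[OF S(1) j, of "M x"] vS by simp
  have e2: "(\<Sum>i\<in>S. cnj (v i) * M i x) = M j x"
    using sum_ind'[OF S(1) j, of "\<lambda>i. M i x"] vS by simp
  have e3: "hf S M v = M j j"
    using hf_ind[OF S(1) j, of M] hf_cong[of S v "\<lambda>i. if i = j then 1 else 0" M] vS by simp
  have Mjx: "M j x = cnj b" using herm[rule_format, of x j] j unfolding b_def by simp
  have "hf (insert x S) M v = cnj s * b + cnj b * s + M j j"
    unfolding hf_insert[OF S] e1 e2 e3 using z Mjx by (simp add: v_def b_def)
  also have "cnj s * b + cnj b * s = - complex_of_real (2 * t * (cmod b)\<^sup>2)"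
  proof -
    have "cnj b * b = of_real ((cmod b)\<^sup>2)" by (metis complex_norm_square mult.commute)
    moreover have "cnj s * b + cnj b * s = - (2 * of_real t * (cnj b * b))"
      unfolding s_def by (simp add: algebra_simps)
    ultimately show ?thesis by simp
  qed
  finally have "Re (hf (insert x S) M v) = Re (M j j) - 2 * t * (cmod b)\<^sup>2" by simp
  also have "2 * t * (cmod b)\<^sup>2 = Re (M j j) + 1" unfolding t_def using bp by simp
  finally have "Re (hf (insert x S) M v) = -1" by simp
  then show False using psd[rule_format, of v] by simp
qed

lemma sos:
  assumes "finite S"
  shows "(\<forall>i\<in>S. \<forall>j\<in>S. M j i = cnj (M i j)) \<Longrightarrow> (\<forall>v. 0 \<le> Re (hf S M v)) \<Longrightarrow>
    \<exists>(K::nat) c. \<forall>v. hf S M v = of_real (\<Sum>k<K. (cmod (\<Sum>j\<in>S. c k j * v j))\<^sup>2)"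
  using assms
proof (induction S arbitrary: M rule: finite_induct)
  case empty
  have "hf {} M v = of_real (\<Sum>k<(0::nat). (cmod (\<Sum>j\<in>{}. (0::complex) * v j))\<^sup>2)" for v
    by (simp add: hf_def)
  then show ?case by (intro exI[of _ "0::nat"] exI[of _ "\<lambda>k j. 0::complex"]) simp
next
  case (insert x S)
  note S = insert.hyps(1,2)
  note herm = insert.prems(1) and psd = insert.prems(2)
  have hxx: "M x x = cnj (M x x)" using herm[rule_format, of x x] by simp
  have Mxx0: "0 \<le> Re (M x x)"
    using psd[rule_format, of "\<lambda>i. if i = x then 1 else 0"] hf_ind[of "insert x S" x M] S by simp
  show ?case
  proof (cases "M x x = 0")
    case True
    have r: "M x j = 0" if "j \<in> S" for j
      by (rule diag_zero_row[OF S that herm psd True])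
    have c: "M i x = 0" if "i \<in> S" for i using r[OF that] herm[rule_format, of x i] that by simp
    have eq: "hf (insert x S) M v = hf S M v" for v
      unfolding hf_insert[OF S] using r c True by simp
    have "\<exists>(K::nat) c. \<forall>v. hf S M v = of_real (\<Sum>k<K. (cmod (\<Sum>j\<in>S. c k j * v j))\<^sup>2)"
    proof (rule insert.IH)
      show "\<forall>i\<in>S. \<forall>j\<in>S. M j i = cnj (M i j)" using herm by blast
      show "\<forall>v. 0 \<le> Re (hf S M v)"
      proof
        fix v show "0 \<le> Re (hf S M v)" using psd[rule_format, of v] eq[of v] by simp
      qed
    qed
    then obtain K :: nat and c where Kc: "\<And>v. hf S M v = of_real (\<Sum>k<K. (cmod (\<Sum>j\<in>S. c k j * v j))\<^sup>2)" by blast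
    define c' where "c' k j = (if j = x then 0 else c k j)" for k j
    have "(\<Sum>j\<in>insert x S. c' k j * v j) = (\<Sum>j\<in>S. c k j * v j)" for k v
      using S by (auto simp: c'_def intro!: sum.cong)
    then show ?thesis using eq Kc by (intro exI[of _ K] exI[of _ c']) simp
  next
    case False
    define \<mu> where "\<mu> = Re (M x x)"
    have Mxxr: "M x x = of_real \<mu>" using hxx unfolding \<mu>_def by (metis Reals_cnj_iff complex_is_Real_iff of_real_Re)
    have mu: "\<mu> > 0"
    proof (rule ccontr)
      assume "\<not> \<mu> > 0"
      then have "\<mu> = 0" using Mxx0 unfolding \<mu>_def by simp
      then show False using False Mxxr by simp
    qed
    define M' where "M' i j = M i j - M i x * M x j / M x x" for i j
    define u where "u v = (\<Sum>j\<in>insert x S. M x j * v j)" for v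
    have cu: "(\<Sum>i\<in>insert x S. cnj (v i) * M i x) = cnj (u v)" for v
      unfolding u_def cnj_sum
    proof (intro sum.cong refl)
      fix i assume "i \<in> insert x S"
      then show "cnj (v i) * M i x = cnj (M x i * v i)" using herm[rule_format, of x i] by simp
    qed
    have k1: "hf (insert x S) M v = hf (insert x S) M' v + cnj (u v) * u v / M x x" for v
    proof -
      have "hf (insert x S) M v = hf (insert x S) M' v
          + (\<Sum>i\<in>insert x S. \<Sum>j\<in>insert x S. cnj (v i) * M i x * (M x j * v j) / M x x)"
        unfolding hf_def M'_def by (simp add: algebra_simps sum.distrib[symmetric] sum_subtractf)
      also have "(\<Sum>i\<in>insert x S. \<Sum>j\<in>insert x S. cnj (v i) * M i x * (M x j * v j) / M x x)
          = (\<Sum>i\<in>insert x S. cnj (v i) * M i x) * u v / M x x"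
        unfolding u_def sum_product sum_divide_distrib ..
      finally show ?thesis unfolding cu .
    qed
    have k2: "hf (insert x S) M' v = hf S M' v" for v
      unfolding hf_insert[OF S] M'_def using False by simp
    have k3: "cnj (u v) * u v / M x x = of_real ((cmod (u v))\<^sup>2 / \<mu>)" for v
      unfolding Mxxr by (simp add: complex_mult_cnj cmod_power2 mult.commute)
    have hermS: "\<forall>i\<in>S. \<forall>j\<in>S. M' j i = cnj (M' i j)"
    proof (intro ballI)
      fix i j assume ij: "i \<in> S" "j \<in> S"
      have h1: "M j i = cnj (M i j)" using herm[rule_format, of i j] ij by simp
      have h2: "M i x = cnj (M x i)" using herm[rule_format, of x i] ij by simp
      have h3: "M j x = cnj (M x j)" using herm[rule_format, of x j] ij by simp
      show "M' j i = cnj (M' i j)" unfolding M'_def h1 h2 h3 using hxx[symmetric] by simp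
    qed
    have psdS: "\<forall>v. 0 \<le> Re (hf S M' v)"
    proof
      fix v
      define v' where "v' = v(x := - (\<Sum>j\<in>S. M x j * v j) / M x x)"
      have "u v' = 0" unfolding u_def v'_def using S False
        by (simp add: sum.insert) (auto intro!: sum.cong)
      then have "hf (insert x S) M v' = hf S M' v'" using k1 k2 by simp
      moreover have "hf S M' v' = hf S M' v" by (rule hf_cong) (use S in \<open>auto simp: v'_def\<close>)
      ultimately show "0 \<le> Re (hf S M' v)" using psd by metis
    qed
    obtain K :: nat and c where Kc: "\<And>v. hf S M' v = of_real (\<Sum>k<K. (cmod (\<Sum>j\<in>S. c k j * v j))\<^sup>2)"
      using insert.IH[OF hermS psdS] by blast
    define c' where "c' k j = (if k < K then (if j = x then 0 else c k j) else M x j / of_real (sqrt \<mu>))" for k j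
    have a1: "(\<Sum>j\<in>insert x S. c' k j * v j) = (\<Sum>j\<in>S. c k j * v j)" if "k < K" for k v
      using S that by (auto simp: c'_def intro!: sum.cong)
    have a2: "(\<Sum>j\<in>insert x S. c' K j * v j) = u v / of_real (sqrt \<mu>)" for v
      unfolding u_def c'_def sum_divide_distrib by (auto intro!: sum.cong)
    have a3: "(cmod (u v / of_real (sqrt \<mu>)))\<^sup>2 = (cmod (u v))\<^sup>2 / \<mu>" for v
      using mu by (simp add: norm_divide power_divide)
    show ?thesis
    proof (intro exI[of _ "Suc K"] exI[of _ c'] allI)
      fix v
      have "hf (insert x S) M v = of_real (\<Sum>k<K. (cmod (\<Sum>j\<in>S. c k j * v j))\<^sup>2) + of_real ((cmod (u v))\<^sup>2 / \<mu>)"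
        unfolding k1 k2 k3 Kc ..
      also have "\<dots> = of_real (\<Sum>k<Suc K. (cmod (\<Sum>j\<in>insert x S. c' k j * v j))\<^sup>2)"
        unfolding sum.lessThan_Suc a2 a3 using a1 by simp
      finally show "hf (insert x S) M v = of_real (\<Sum>k<Suc K. (cmod (\<Sum>j\<in>insert x S. c' k j * v j))\<^sup>2)" .
    qed
  qed
qed



lemma upoly_cont: "upoly f \<Longrightarrow> continuous_on UNIV f"
proof -
  assume "upoly f"
  then obtain p where p: "\<And>x. f x = poly p x" unfolding upoly_def by blast
  have "f = (\<lambda>x. poly p x)" using p by auto
  then show ?thesis by (simp add: continuous_on_poly continuous_on_id)
qed

lemma lpoly_cont: "lpoly f \<Longrightarrow> continuous_on UNIV (\<lambda>s. f (lin y x s))"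
  unfolding lpoly_def by (blast intro: upoly_cont)

lemma sqnorm_cont:
  assumes "\<And>i. i < k \<Longrightarrow> lpoly (F i)"
  shows "continuous_on UNIV (\<lambda>s. sqnorm k F (lin y x s))"
  unfolding sqnorm_def
  by (intro continuous_on_sum continuous_on_power continuous_on_norm lpoly_cont assms) simp

lemma density:
  fixes g :: "complex^'n \<Rightarrow> complex" and \<phi> :: "complex^'n \<Rightarrow> real"
  assumes g: "lpoly g" "g w \<noteq> 0" and cont: "\<And>y x. continuous_on UNIV (\<lambda>s. \<phi> (lin y x s))"
   and h: "\<And>z. g z \<noteq> 0 \<Longrightarrow> \<phi> z = 0"
  shows "\<phi> z = 0"
proof -
  obtain p where p: "\<And>s. g (lin z w s) = poly p s" using g(1) unfolding lpoly_def upoly_def by blast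
  have "p \<noteq> 0" using p[of 1] g(2) by auto
  then have fin: "finite {s. poly p s = 0}" by (rule poly_roots_finite)
  define sq where "sq n = inverse (of_nat (Suc n) :: complex)" for n
  have inj: "inj sq" unfolding sq_def inj_def by simp
  have "finite (sq -` {s. poly p s = 0})" by (rule finite_vimageI[OF fin inj])
  then have "eventually (\<lambda>n. poly p (sq n) \<noteq> 0) cofinite"
    unfolding eventually_cofinite by (simp add: vimage_def)
  then have ev: "eventually (\<lambda>n. \<phi> (lin z w (sq n)) = 0) sequentially"
    unfolding cofinite_eq_sequentially
    by (rule eventually_mono) (use h p in auto)
  have "sq \<longlonglongrightarrow> 0"
    unfolding sq_def using lim_inverse_n LIMSEQ_Suc by blast
  then have "(\<lambda>n. \<phi> (lin z w (sq n))) \<longlonglongrightarrow> \<phi> (lin z w 0)"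
    by (intro continuous_on_tendsto_compose[OF cont]) auto
  moreover have "(\<lambda>n. \<phi> (lin z w (sq n))) \<longlonglongrightarrow> 0"
    using ev by (rule tendsto_eventually)
  ultimately show ?thesis using LIMSEQ_unique by fastforce
qed

lemma sum_div_mod:
  fixes g :: "nat \<Rightarrow> nat \<Rightarrow> 'a::comm_monoid_add"
  shows "(\<Sum>m<a*p. g (m div p) (m mod p)) = (\<Sum>i<a. \<Sum>j<p. g i j)"
proof -
  have "(\<Sum>m<a*p. g (m div p) (m mod p)) = (\<Sum>(i,j)\<in>{..<a}\<times>{..<p}. g i j)"
  proof (rule sum.reindex_bij_witness[where i="\<lambda>(i,j). i*p+j" and j="\<lambda>m. (m div p, m mod p)"])
    fix m assume m: "m \<in> {..<a*p}"
    then have pp: "p > 0" by (cases "p = 0") auto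
    show "(case (m div p, m mod p) of (i, j) \<Rightarrow> i * p + j) = m" by simp
    show "(m div p, m mod p) \<in> {..<a}\<times>{..<p}" using m pp by (auto simp: div_less_iff_less_mult)
    show "(case (m div p, m mod p) of (i, j) \<Rightarrow> g i j) = g (m div p) (m mod p)" by simp
  next
    fix ij assume ij: "ij \<in> {..<a}\<times>{..<p}"
    obtain i j where e: "ij = (i,j)" by (cases ij)
    have i: "i < a" and j: "j < p" using ij e by auto
    have "i * p + j < a * p"
    proof -
      have "i * p + j < i * p + p" using j by simp
      also have "\<dots> = Suc i * p" by simp
      also have "\<dots> \<le> a * p" using i by (intro mult_right_mono) auto
      finally show ?thesis .
    qed
    then show "(case ij of (i, j) \<Rightarrow> i * p + j) \<in> {..<a*p}" using e by simp
    show "((case ij of (i, j) \<Rightarrow> i * p + j) div p, (case ij of (i, j) \<Rightarrow> i * p + j) mod p) = ij"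
      using e j by simp
  qed
  also have "\<dots> = (\<Sum>i<a. \<Sum>j<p. g i j)" by (rule sum.cartesian_product[symmetric])
  finally show ?thesis .
qed

lemma sqnorm_tensor: "sqnorm (a*p) (tensor_map p B P) z = sqnorm a B z * sqnorm p P z"
  unfolding sqnorm_def tensor_map_def sum_product
  using sum_div_mod[where g="\<lambda>i j. (cmod (B i z * P j z))\<^sup>2" and a=a and p=p]
  by (simp add: norm_mult power_mult_distrib)

lemma lpoly_tensor:
  assumes "hol_poly_map a B" "hol_poly_map p P" "i < a * p"
  shows "lpoly (tensor_map p B P i)"
proof -
  have pp: "p > 0" using assms(3) by (cases "p = 0") auto
  have "i div p < a" using assms(3) pp by (simp add: div_less_iff_less_mult)
  moreover have "i mod p < p" using pp by simp
  ultimately show ?thesis using assms(1,2) unfolding tensor_map_def hol_poly_map_def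
    by (intro lpoly_mult hol_poly_lpoly) auto
qed



lemma hol_poly_gen:
  fixes f :: "complex^'n \<Rightarrow> complex"
  assumes I: "finite I" and f: "\<And>z. f z = (\<Sum>i\<in>I. c i * monom z (e i))"
  shows "hol_poly f"
  unfolding hol_poly_def
proof (intro exI conjI allI)
  show "finite (e ` I)" using I by simp
  fix z
  have "f z = (\<Sum>\<gamma>\<in>e ` I. \<Sum>i\<in>{i\<in>I. e i = \<gamma>}. c i * monom z (e i))"
    unfolding f by (rule sum.image_gen[OF I])
  also have "\<dots> = (\<Sum>\<gamma>\<in>e ` I. (\<Sum>i\<in>{i\<in>I. e i = \<gamma>}. c i) * monom z \<gamma>)"
    unfolding sum_distrib_right by (intro sum.cong refl) auto
  finally show "f z = (\<Sum>\<gamma>\<in>e ` I. (\<lambda>\<gamma>. \<Sum>i\<in>{i\<in>I. e i = \<gamma>}. c i) \<gamma> * monom z \<gamma>)" by simp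
qed

lemma monom_add: "monom z (\<alpha> + \<beta>) = monom z \<alpha> * monom z \<beta>"
  unfolding monom_def by (simp add: power_add prod.distrib)

lemma hol_poly_mult:
  fixes f g :: "complex^'n \<Rightarrow> complex"
  assumes "hol_poly f" "hol_poly g"
  shows "hol_poly (\<lambda>z. f z * g z)"
proof -
  obtain A a where A: "finite A" and f: "\<And>z. f z = (\<Sum>\<alpha>\<in>A. a \<alpha> * monom z \<alpha>)"
    using assms(1) unfolding hol_poly_def by blast
  obtain B b where B: "finite B" and g: "\<And>z. g z = (\<Sum>\<alpha>\<in>B. b \<alpha> * monom z \<alpha>)"
    using assms(2) unfolding hol_poly_def by blast
  show ?thesis
  proof (rule hol_poly_gen[where I="A \<times> B" and c="\<lambda>(\<alpha>,\<beta>). a \<alpha> * b \<beta>" and e="\<lambda>(\<alpha>,\<beta>). \<alpha> + \<beta>"])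
    show "finite (A \<times> B)" using A B by simp
    fix z
    have "f z * g z = (\<Sum>\<alpha>\<in>A. \<Sum>\<beta>\<in>B. (a \<alpha> * monom z \<alpha>) * (b \<beta> * monom z \<beta>))"
      unfolding f g sum_product ..
    also have "\<dots> = (\<Sum>(\<alpha>,\<beta>)\<in>A \<times> B. (a \<alpha> * monom z \<alpha>) * (b \<beta> * monom z \<beta>))"
      by (rule sum.cartesian_product)
    also have "\<dots> = (\<Sum>i\<in>A \<times> B. (case i of (\<alpha>,\<beta>) \<Rightarrow> a \<alpha> * b \<beta>) * monom z (case i of (\<alpha>,\<beta>) \<Rightarrow> \<alpha> + \<beta>))"
      by (intro sum.cong refl) (auto simp: monom_add)
    finally show "f z * g z = (\<Sum>i\<in>A \<times> B. (case i of (\<alpha>,\<beta>) \<Rightarrow> a \<alpha> * b \<beta>) * monom z (case i of (\<alpha>,\<beta>) \<Rightarrow> \<alpha> + \<beta>))" .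
  qed
qed

lemma hol_poly_scale:
  fixes f :: "complex^'n \<Rightarrow> complex"
  assumes "hol_poly f" shows "hol_poly (\<lambda>z. c * f z)"
proof -
  obtain A a where A: "finite A" and f: "\<And>z. f z = (\<Sum>\<alpha>\<in>A. a \<alpha> * monom z \<alpha>)"
    using assms(1) unfolding hol_poly_def by blast
  show ?thesis
    by (rule hol_poly_gen[where I=A and c="\<lambda>\<alpha>. c * a \<alpha>" and e="\<lambda>\<alpha>. \<alpha>", OF A])
       (simp add: f sum_distrib_left mult.assoc)
qed

lemma hol_poly_zero: "hol_poly (\<lambda>z. 0)"
  unfolding hol_poly_def by (rule exI[of _ "{}"]) simp

lemma hol_poly_add:
  fixes f g :: "complex^'n \<Rightarrow> complex"
  assumes "hol_poly f" "hol_poly g"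
  shows "hol_poly (\<lambda>z. f z + g z)"
proof -
  obtain A a where A: "finite A" and f: "\<And>z. f z = (\<Sum>\<alpha>\<in>A. a \<alpha> * monom z \<alpha>)"
    using assms(1) unfolding hol_poly_def by blast
  obtain B b where B: "finite B" and g: "\<And>z. g z = (\<Sum>\<alpha>\<in>B. b \<alpha> * monom z \<alpha>)"
    using assms(2) unfolding hol_poly_def by blast
  show ?thesis
  proof (rule hol_poly_gen[where I="A <+> B" and c="case_sum a b" and e="case_sum id id"])
    show "finite (A <+> B)" using A B by simp
    fix z show "f z + g z = (\<Sum>i\<in>A <+> B. case_sum a b i * monom z (case_sum id id i))"
      unfolding sum.Plus[OF A B] f g by (simp add: comp_def)
  qed
qed

lemma hol_poly_sum:
  fixes f :: "nat \<Rightarrow> complex^'n \<Rightarrow> complex"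
  shows "(\<And>j. j < d \<Longrightarrow> hol_poly (f j)) \<Longrightarrow> hol_poly (\<lambda>z. \<Sum>j<d. f j z)"
proof (induction d)
  case 0 then show ?case by (simp add: hol_poly_zero)
next
  case (Suc d)
  then show ?case by (simp add: hol_poly_add)
qed

lemma restrict_sum:
  fixes f g :: "'a \<Rightarrow> complex"
  assumes "finite W" "U \<subseteq> W"
  shows "(\<Sum>\<alpha>\<in>W. (if \<alpha> \<in> U then f \<alpha> else 0) * g \<alpha>) = (\<Sum>\<alpha>\<in>U. f \<alpha> * g \<alpha>)"
  by (rule sum.mono_neutral_cong_left[symmetric]) (use assms in auto)

lemma hol_poly_map_common:
  fixes P :: "nat \<Rightarrow> complex^'n \<Rightarrow> complex"
  shows "hol_poly_map p P \<Longrightarrow> \<exists>U cc. finite U \<and> (\<forall>i<p. \<forall>z. P i z = (\<Sum>\<alpha>\<in>U. cc i \<alpha> * monom z \<alpha>))"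
proof (induction p)
  case 0 then show ?case by auto
next
  case (Suc p)
  then have "hol_poly_map p P" unfolding hol_poly_map_def by auto
  then obtain U cc where U: "finite U" and cc: "\<forall>i<p. \<forall>z. P i z = (\<Sum>\<alpha>\<in>U. cc i \<alpha> * monom z \<alpha>)"
    using Suc.IH by blast
  obtain A c where A: "finite A" and c: "\<And>z. P p z = (\<Sum>\<alpha>\<in>A. c \<alpha> * monom z \<alpha>)"
    using Suc.prems unfolding hol_poly_map_def hol_poly_def by blast
  define cc' where "cc' i \<alpha> = (if i = p then (if \<alpha> \<in> A then c \<alpha> else 0) else (if \<alpha> \<in> U then cc i \<alpha> else 0))" for i \<alpha>
  show ?case
  proof (intro exI conjI allI impI)
    show "finite (U \<union> A)" using U A by simp
    fix i z assume i: "i < Suc p"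
    show "P i z = (\<Sum>\<alpha>\<in>U \<union> A. cc' i \<alpha> * monom z \<alpha>)"
    proof (cases "i = p")
      case True
      then show ?thesis using c[of z] restrict_sum[of "U \<union> A" A] U A by (simp add: cc'_def)
    next
      case False
      then have "i < p" using i by simp
      then show ?thesis unfolding cc'_def using cc restrict_sum[of "U \<union> A" U] U A False by simp
    qed
  qed
qed



lemma swap3: "(\<Sum>a\<in>A. \<Sum>b\<in>B. \<Sum>i\<in>I. f i a b) = (\<Sum>i\<in>I. \<Sum>a\<in>A. \<Sum>b\<in>B. f i a b)"
proof -
  have "(\<Sum>a\<in>A. \<Sum>b\<in>B. \<Sum>i\<in>I. f i a b) = (\<Sum>a\<in>A. \<Sum>i\<in>I. \<Sum>b\<in>B. f i a b)"
    by (rule sum.cong[OF refl], rule sum.swap)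
  also have "\<dots> = (\<Sum>i\<in>I. \<Sum>a\<in>A. \<Sum>b\<in>B. f i a b)" by (rule sum.swap)
  finally show ?thesis .
qed

lemma herm_sqnorm_diff:
  fixes P N :: "nat \<Rightarrow> complex^'n \<Rightarrow> complex"
  assumes hP: "hol_poly_map p P" and hN: "hol_poly_map q N"
  shows "herm_sym_poly (\<lambda>z. sqnorm p P z - sqnorm q N z)"
proof -
  define Q where "Q i = (if i < p then P i else N (i - p))" for i
  have "hol_poly_map (p+q) Q" using hP hN unfolding hol_poly_map_def Q_def by auto
  then obtain U cc where U: "finite U" and cc: "\<forall>i<p+q. \<forall>z. Q i z = (\<Sum>\<alpha>\<in>U. cc i \<alpha> * monom z \<alpha>)"
    using hol_poly_map_common by blast
  define T where "T i \<alpha> \<beta> z = cc i \<alpha> * cnj (cc i \<beta>) * (monom z \<alpha> * cnj (monom z \<beta>))" for i \<alpha> \<beta> z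
  have sq: "complex_of_real ((cmod (Q i z))\<^sup>2) = (\<Sum>\<alpha>\<in>U. \<Sum>\<beta>\<in>U. T i \<alpha> \<beta> z)" if "i < p+q" for i z
  proof -
    have "complex_of_real ((cmod (Q i z))\<^sup>2) = Q i z * cnj (Q i z)" by (rule complex_norm_square)
    also have "\<dots> = (\<Sum>\<alpha>\<in>U. cc i \<alpha> * monom z \<alpha>) * (\<Sum>\<beta>\<in>U. cnj (cc i \<beta>) * cnj (monom z \<beta>))"
      using cc that by (simp add: cnj_sum)
    also have "\<dots> = (\<Sum>\<alpha>\<in>U. \<Sum>\<beta>\<in>U. T i \<alpha> \<beta> z)"
      unfolding sum_product T_def by (simp add: algebra_simps)
    finally show ?thesis .
  qed
  define C where "C ab = (\<Sum>i<p. cc i (fst ab) * cnj (cc i (snd ab))) - (\<Sum>j<q. cc (p+j) (fst ab) * cnj (cc (p+j) (snd ab)))" for ab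
  show ?thesis unfolding herm_sym_poly_def
  proof (intro exI conjI allI)
    show "finite (U \<times> U)" using U by simp
    fix \<alpha> \<beta> show "C (\<beta>, \<alpha>) = cnj (C (\<alpha>, \<beta>))"
      unfolding C_def by (simp add: cnj_sum mult.commute)
  next
    fix z
    have "(\<Sum>(\<alpha>,\<beta>)\<in>U \<times> U. C (\<alpha>, \<beta>) * monom z \<alpha> * cnj (monom z \<beta>))
        = (\<Sum>\<alpha>\<in>U. \<Sum>\<beta>\<in>U. C (\<alpha>, \<beta>) * monom z \<alpha> * cnj (monom z \<beta>))"
      by (rule sum.cartesian_product[symmetric])
    also have "\<dots> = (\<Sum>\<alpha>\<in>U. \<Sum>\<beta>\<in>U. (\<Sum>i<p. T i \<alpha> \<beta> z) - (\<Sum>j<q. T (p+j) \<alpha> \<beta> z))"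
      unfolding C_def T_def by (simp add: sum_distrib_right left_diff_distrib mult.assoc)
    also have "\<dots> = (\<Sum>i<p. \<Sum>\<alpha>\<in>U. \<Sum>\<beta>\<in>U. T i \<alpha> \<beta> z) - (\<Sum>j<q. \<Sum>\<alpha>\<in>U. \<Sum>\<beta>\<in>U. T (p+j) \<alpha> \<beta> z)"
      unfolding sum_subtractf swap3[where A=U and B=U and I="{..<p}"] swap3[where A=U and B=U and I="{..<q}"] ..
    also have "\<dots> = (\<Sum>i<p. complex_of_real ((cmod (P i z))\<^sup>2)) - (\<Sum>j<q. complex_of_real ((cmod (N j z))\<^sup>2))"
    proof -
      have "(\<Sum>i<p. \<Sum>\<alpha>\<in>U. \<Sum>\<beta>\<in>U. T i \<alpha> \<beta> z) = (\<Sum>i<p. complex_of_real ((cmod (P i z))\<^sup>2))"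
        by (rule sum.cong[OF refl]) (simp add: sq[symmetric] Q_def)
      moreover have "(\<Sum>j<q. \<Sum>\<alpha>\<in>U. \<Sum>\<beta>\<in>U. T (p+j) \<alpha> \<beta> z) = (\<Sum>j<q. complex_of_real ((cmod (N j z))\<^sup>2))"
        by (rule sum.cong[OF refl]) (simp add: sq[symmetric] Q_def)
      ultimately show ?thesis by simp
    qed
    also have "\<dots> = complex_of_real (sqnorm p P z - sqnorm q N z)"
      unfolding sqnorm_def by simp
    finally show "complex_of_real (sqnorm p P z - sqnorm q N z)
       = (\<Sum>(\<alpha>,\<beta>)\<in>U \<times> U. C (\<alpha>, \<beta>) * monom z \<alpha> * cnj (monom z \<beta>))" ..
  qed
qed



lemma idx_bounds: "j < a * p \<Longrightarrow> j div p < a \<and> j mod p < (p::nat)"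
proof -
  assume j: "j < a * p"
  then have pp: "p > 0" by (cases "p = 0") auto
  then show ?thesis using j by (simp add: div_less_iff_less_mult)
qed

theorem proposition3p1:
  fixes P N :: "nat \<Rightarrow> complex^'n \<Rightarrow> complex" and p q :: nat
  assumes "hol_poly_map p P" and "hol_poly_map q N"
  shows "in_Q (\<lambda>z. sqnorm p P z - sqnorm q N z) \<longleftrightarrow>
    (\<exists>a B L. hol_poly_map a B \<and> (\<exists>z i. i < a \<and> B i z \<noteq> 0) \<and>
       nonneg_def (a * p) (id_minus_adj_mult (a * q) L) \<and>
       (\<forall>z. \<forall>i < a * q. tensor_map q B N i z = mat_apply (a * p) L (\<lambda>j. tensor_map p B P j z) i))"
proof
  note hP = assms(1) and hN = assms(2)
  assume "in_Q (\<lambda>z. sqnorm p P z - sqnorm q N z)"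
  then obtain k F l G where hF: "hol_poly_map k F" and hG: "hol_poly_map l G"
    and nz: "\<exists>z i. i < l \<and> G i z \<noteq> 0"
    and rep: "\<And>z. sqnorm l G z \<noteq> 0 \<Longrightarrow> sqnorm p P z - sqnorm q N z = sqnorm k F z / sqnorm l G z"
    unfolding in_Q_def by blast
  obtain w i0 where i0: "i0 < l" and w: "G i0 w \<noteq> 0" using nz by blast
  have lG: "\<And>i. i < l \<Longrightarrow> lpoly (G i)" using hG unfolding hol_poly_map_def by (simp add: hol_poly_lpoly)
  have lP: "\<And>i. i < p \<Longrightarrow> lpoly (P i)" using hP unfolding hol_poly_map_def by (simp add: hol_poly_lpoly)
  have lN: "\<And>i. i < q \<Longrightarrow> lpoly (N i)" using hN unfolding hol_poly_map_def by (simp add: hol_poly_lpoly)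
  have lF: "\<And>i. i < k \<Longrightarrow> lpoly (F i)" using hF unfolding hol_poly_map_def by (simp add: hol_poly_lpoly)
  have ident: "sqnorm l G z * (sqnorm p P z - sqnorm q N z) - sqnorm k F z = 0" for z
  proof (rule density[where g="G i0" and w=w])
    show "lpoly (G i0)" by (rule lG[OF i0])
    show "G i0 w \<noteq> 0" by (rule w)
    fix y x
    show "continuous_on UNIV (\<lambda>s. sqnorm l G (lin y x s) * (sqnorm p P (lin y x s) - sqnorm q N (lin y x s)) - sqnorm k F (lin y x s))"
      by (intro continuous_on_diff continuous_on_mult sqnorm_cont lG lP lN lF)
  next
    fix z assume gz: "G i0 z \<noteq> 0"
    have "0 < (cmod (G i0 z))\<^sup>2" using gz by simp
    also have "(cmod (G i0 z))\<^sup>2 \<le> sqnorm l G z" unfolding sqnorm_def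
      by (rule member_le_sum[of i0 "{..<l}" "\<lambda>i. (cmod (G i z))\<^sup>2"]) (use i0 in auto)
    finally have "sqnorm l G z \<noteq> 0" by simp
    then show "sqnorm l G z * (sqnorm p P z - sqnorm q N z) - sqnorm k F z = 0"
      using rep[of z] by simp
  qed
  define A where "A = tensor_map p G P"
  define C where "C = tensor_map q G N"
  have id2: "sqnorm (l*p) A z = sqnorm (l*q) C z + sqnorm k F z" for z
    using ident[of z] unfolding A_def C_def sqnorm_tensor by (simp add: algebra_simps)
  have lA: "\<And>i. i < l*p \<Longrightarrow> lpoly (A i)" unfolding A_def using hG hP by (rule lpoly_tensor)
  have lC: "\<And>i. i < l*q \<Longrightarrow> lpoly (C i)" unfolding C_def using hG hN by (rule lpoly_tensor)
  have GR: "ip (l*p) (\<lambda>i. A i x) (\<lambda>i. A i y) = ip (l*q) (\<lambda>i. C i x) (\<lambda>i. C i y) + ip k (\<lambda>i. F i x) (\<lambda>i. F i y)" for x y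
    by (rule gram_polar[OF lA lC lF id2])
  have D: "sqn (l*q) (comb m \<delta> (\<lambda>j. (\<lambda>x i. C i x) (w j))) \<le> sqn (l*p) (comb m \<delta> (\<lambda>j. (\<lambda>x i. A i x) (w j)))" for m w \<delta>
    by (rule domination[where X="\<lambda>x i. A i x" and Y="\<lambda>x i. C i x" and Z="\<lambda>x i. F i x", OF GR])
  obtain L where L1: "\<forall>x. \<forall>i<l*q. C i x = (\<Sum>j<l*p. L i j * A j x)"
     and L2: "\<forall>v. sqn (l*q) (\<lambda>i. \<Sum>j<l*p. L i j * v j) \<le> sqn (l*p) v"
    using contraction_ext[where X="\<lambda>x i. A i x" and Y="\<lambda>x i. C i x" and d="l*p" and e="l*q", OF D] by blast
  show "\<exists>a B L. hol_poly_map a B \<and> (\<exists>z i. i < a \<and> B i z \<noteq> 0) \<and>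
       nonneg_def (a * p) (id_minus_adj_mult (a * q) L) \<and>
       (\<forall>z. \<forall>i < a * q. tensor_map q B N i z = mat_apply (a * p) L (\<lambda>j. tensor_map p B P j z) i)"
  proof (rule exI[of _ l], rule exI[of _ G], rule exI[of _ L], intro conjI)
    show "hol_poly_map l G" by (rule hG)
    show "\<exists>z i. i < l \<and> G i z \<noteq> 0" by (rule nz)
    show "nonneg_def (l * p) (id_minus_adj_mult (l * q) L)" unfolding nonneg_def_iff using L2 by blast
    show "\<forall>z. \<forall>i < l * q. tensor_map q G N i z = mat_apply (l * p) L (\<lambda>j. tensor_map p G P j z) i"
      using L1 unfolding A_def C_def mat_apply_def by blast
  qed
next
  note hP = assms(1) and hN = assms(2)
  assume "\<exists>a B L. hol_poly_map a B \<and> (\<exists>z i. i < a \<and> B i z \<noteq> 0) \<and>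
       nonneg_def (a * p) (id_minus_adj_mult (a * q) L) \<and>
       (\<forall>z. \<forall>i < a * q. tensor_map q B N i z = mat_apply (a * p) L (\<lambda>j. tensor_map p B P j z) i)"
  then obtain a B L where hB: "hol_poly_map a B" and nz: "\<exists>z i. i < a \<and> B i z \<noteq> 0"
    and nn: "nonneg_def (a * p) (id_minus_adj_mult (a * q) L)"
    and eq: "\<And>z i. i < a * q \<Longrightarrow> tensor_map q B N i z = mat_apply (a * p) L (\<lambda>j. tensor_map p B P j z) i"
    by blast
  define d where "d = a * p"
  define M where "M = id_minus_adj_mult (a * q) L"
  have herm: "\<forall>i\<in>{..<d}. \<forall>j\<in>{..<d}. M j i = cnj (M i j)"
    unfolding M_def id_minus_adj_mult_def by (simp add: cnj_sum mult.commute)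
  have psd: "\<forall>v. 0 \<le> Re (hf {..<d} M v)"
    using nn unfolding nonneg_def_def Let_def hf_def M_def d_def by blast
  obtain K :: nat and c where Kc: "\<And>v. hf {..<d} M v = of_real (\<Sum>kk<K. (cmod (\<Sum>j\<in>{..<d}. c kk j * v j))\<^sup>2)"
    using sos[OF finite_lessThan herm psd] by blast
  define F where "F kk z = (\<Sum>j<d. c kk j * tensor_map p B P j z)" for kk z
  have key: "sqnorm K F z = sqnorm a B z * (sqnorm p P z - sqnorm q N z)" for z
  proof -
    define v where "v j = tensor_map p B P j z" for j
    have "complex_of_real (sqnorm K F z) = hf {..<d} M v"
      unfolding Kc sqnorm_def F_def v_def by simp
    also have "\<dots> = of_real (sqn d v - sqn (a*q) (\<lambda>i. \<Sum>j<d. L i j * v j))"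
      unfolding hf_def M_def form_id by simp
    also have "sqn (a*q) (\<lambda>i. \<Sum>j<d. L i j * v j) = sqn (a*q) (\<lambda>i. tensor_map q B N i z)"
      by (rule sqn_cong) (simp add: eq mat_apply_def v_def d_def)
    also have "sqn d v = sqnorm a B z * sqnorm p P z"
      unfolding d_def v_def sqnorm_sqn[symmetric] sqnorm_tensor ..
    also have "sqn (a*q) (\<lambda>i. tensor_map q B N i z) = sqnorm a B z * sqnorm q N z"
      unfolding sqnorm_sqn[symmetric] sqnorm_tensor ..
    finally have e: "complex_of_real (sqnorm K F z) = complex_of_real (sqnorm a B z * sqnorm p P z - sqnorm a B z * sqnorm q N z)" .
    then have "sqnorm K F z = sqnorm a B z * sqnorm p P z - sqnorm a B z * sqnorm q N z"
      by (simp only: of_real_eq_iff)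
    then show ?thesis by (simp add: algebra_simps)
  qed
  have hFK: "hol_poly_map K F"
    unfolding hol_poly_map_def F_def
  proof (intro allI impI hol_poly_sum hol_poly_scale)
    fix kk j assume "j < d"
    then have "j div p < a" "j mod p < p" using idx_bounds unfolding d_def by blast+
    then show "hol_poly (tensor_map p B P j)"
      using hB hP unfolding tensor_map_def hol_poly_map_def by (intro hol_poly_mult) auto
  qed
  show "in_Q (\<lambda>z. sqnorm p P z - sqnorm q N z)"
    unfolding in_Q_def
  proof (rule conjI, rule herm_sqnorm_diff[OF hP hN], rule exI[of _ K], rule exI[of _ F],
      rule exI[of _ a], rule exI[of _ B], intro conjI)
    show "hol_poly_map K F" by (rule hFK)
    show "hol_poly_map a B" by (rule hB)
    show "\<exists>z i. i < a \<and> B i z \<noteq> 0" by (rule nz)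
    show "\<forall>z. sqnorm a B z \<noteq> 0 \<longrightarrow> sqnorm p P z - sqnorm q N z = sqnorm K F z / sqnorm a B z"
      using key by simp
  qed
qed

end
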